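(* Let $n\ge1$, $a\in[-\infty,+\infty)$, $b\in(-\infty,+\infty]$ with $a\le b$, and $\mathbf y\in\mathbb R^n$. Let $\boldsymbol\theta^*$ be the unique minimizer of $\|\mathbf y-\mathbf v\|_2^2$ over $\mathbf v\in\mathcal S_n^\uparrow$, and $\boldsymbol\theta$ the unique minimizer of $\|\mathbf y-\mathbf v\|_2^2$ over $\mathbf v\in\mathcal S_n^\uparrow(a,b)$, where $\mathcal S_n^\uparrow(a,b)=\{\mathbf v\in\mathcal S_n^\uparrow: a\le v_1,\ v_n\le b\}$. Then $k(\boldsymbol\theta)\le k(\boldsymbol\theta^* )$.
   Context: $\mathcal S_n^\uparrow=\{\mathbf u\in\mathbb R^n:u_1\le\dots\le u_n\}$. For $\mathbf u\in\mathbb R^n$, $k(\mathbf u)=|\{u_1,\dots,u_n\}|$, the number of distinct values of $\mathbf u$. *)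

theory Defs
  imports Complex_Main "HOL-Library.Extended_Real"
begin

text \<open>Vectors in R^n are represented as real lists of length n; entry u_i is u ! (i-1).\<close>

definition mono_cone :: "nat \<Rightarrow> real list set" where
  "mono_cone n = {u. length u = n \<and> (\<forall>i j. i \<le> j \<longrightarrow> j < n \<longrightarrow> u ! i \<le> u ! j)}"

definition bounded_mono_cone :: "nat \<Rightarrow> ereal \<Rightarrow> ereal \<Rightarrow> real list set" where
  "bounded_mono_cone n a b =
     {u \<in> mono_cone n. a \<le> ereal (u ! 0) \<and> ereal (u ! (n - 1)) \<le> b}"

definition sqdist :: "real list \<Rightarrow> real list \<Rightarrow> real" where
  "sqdist y v = (\<Sum>i<length y. (y ! i - v ! i)^2)"

definition is_minimizer_on :: "real list set \<Rightarrow> real list \<Rightarrow> real list \<Rightarrow> bool" where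
  "is_minimizer_on S y t \<longleftrightarrow> t \<in> S \<and> (\<forall>v\<in>S. sqdist y t \<le> sqdist y v)"

definition num_distinct :: "real list \<Rightarrow> nat" where
  "num_distinct u = card (set u)"

end

theory Submission
  imports Defs
begin

definition clip :: "ereal \<Rightarrow> ereal \<Rightarrow> real \<Rightarrow> real" where
 "clip a b x = (if ereal x < a then real_of_ereal a else if b < ereal x then real_of_ereal b else x)"

lemma clip_bnd: assumes "a \<noteq> \<infinity>" "b \<noteq> -\<infinity>" "a \<le> b"
  shows "a \<le> ereal (clip a b x) \<and> ereal (clip a b x) \<le> b"
  using assms by (cases a; cases b; auto simp: clip_def)
lemma clip_mono: assumes "a \<noteq> \<infinity>" "b \<noteq> -\<infinity>" "a \<le> b" "x \<le> z"
  shows "clip a b x \<le> clip a b z"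
  using assms by (cases a; cases b; auto simp: clip_def)
lemma clip_mono2: assumes "a \<noteq> \<infinity>" "b \<noteq> -\<infinity>" "a \<le> b" "x \<le> z"
  shows "2*x - clip a b x \<le> 2*z - clip a b z"
  using assms by (cases a; cases b; auto simp: clip_def)
lemma clip_vi: assumes "a \<noteq> \<infinity>" "b \<noteq> -\<infinity>" "a \<le> b" "a \<le> ereal w" "ereal w \<le> b"
  shows "(x - clip a b x) * (w - clip a b x) \<le> 0"
  using assms by (cases a; cases b; auto simp: clip_def mult_nonneg_nonpos mult_nonpos_nonneg)

lemma vi:
  assumes min: "is_minimizer_on (mono_cone n) y t" and ly: "length y = n"
    and u: "u \<in> mono_cone n"
  shows "(\<Sum>i<n. (y!i - t!i)*(u!i - t!i)) \<le> 0"
proof (rule ccontr)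
  define d where "d i = u!i - t!i" for i
  define r where "r i = y!i - t!i" for i
  define P where "P = (\<Sum>i<n. r i * d i)"
  define Q where "Q = (\<Sum>i<n. (d i)^2)"
  assume "\<not> ?thesis"
  hence Ppos: "P > 0" by (simp add: P_def r_def d_def)
  have tm: "t \<in> mono_cone n" using min by (simp add: is_minimizer_on_def)
  have key: "2*P \<le> s*Q" if s: "0 < s" "s \<le> 1" for s
  proof -
    define w where "w = map (\<lambda>i. t!i + s * d i) [0..<n]"
    have wi: "w!i = t!i + s * d i" if "i<n" for i using that by (simp add: w_def)
    have "w \<in> mono_cone n"
      unfolding mono_cone_def
    proof (safe)
      show "length w = n" by (simp add: w_def)
      fix i j assume ij: "i \<le> j" "j < n"
      have "t!i \<le> t!j" "u!i \<le> u!j" using tm u ij by (auto simp: mono_cone_def)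
      hence "(1-s)*t!i + s*u!i \<le> (1-s)*t!j + s*u!j"
        using s by (intro add_mono mult_left_mono) auto
      thus "w!i \<le> w!j" using ij by (simp add: wi d_def algebra_simps)
    qed
    hence le: "sqdist y t \<le> sqdist y w" using min by (auto simp: is_minimizer_on_def)
    have "sqdist y w = (\<Sum>i<n. (r i)^2) - 2*s*P + s^2*Q"
      unfolding sqdist_def ly P_def Q_def
      by (simp add: wi r_def sum_subtractf sum_distrib_left power2_eq_square algebra_simps
          sum.distrib)
    moreover have "sqdist y t = (\<Sum>i<n. (r i)^2)" by (simp add: sqdist_def ly r_def)
    ultimately have "0 \<le> s*(s*Q - 2*P)" using le by (simp add: algebra_simps power2_eq_square)
    thus ?thesis using s by (simp add: zero_le_mult_iff)
  qed
  have Q0: "Q \<ge> 0" unfolding Q_def by (intro sum_nonneg) auto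
  show False
  proof (cases "P/Q \<ge> 1")
    case True
    have "Q \<le> P" using True Q0 Ppos by (cases "Q=0") (simp_all add: le_divide_eq)
    thus False using key[of 1] Ppos by auto
  next
    case False
    have "Q > 0" using False Q0 Ppos key[of 1] by (cases "Q=0") auto
    hence "2*P \<le> (P/Q)*Q" using False Ppos by (intro key) auto
    thus False using \<open>Q>0\<close> Ppos by simp
  qed
qed

theorem mainTheorem4:
  fixes n :: nat and a b :: ereal and y \<theta>s \<theta> :: "real list"
  assumes "n \<ge> 1"
    and "a \<noteq> \<infinity>" and "b \<noteq> -\<infinity>" and "a \<le> b"
    and "length y = n"
    and "is_minimizer_on (mono_cone n) y \<theta>s"
    and "is_minimizer_on (bounded_mono_cone n a b) y \<theta>"
  shows "num_distinct \<theta> \<le> num_distinct \<theta>s"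
proof -
  note ab = assms(2,3,4)
  define c where "c = map (clip a b) \<theta>s"
  have ts: "\<theta>s \<in> mono_cone n" using assms(6) by (simp add: is_minimizer_on_def)
  have tb: "\<theta> \<in> bounded_mono_cone n a b" using assms(7) by (simp add: is_minimizer_on_def)
  have tm: "\<theta> \<in> mono_cone n" using tb by (simp add: bounded_mono_cone_def)
  have lts: "length \<theta>s = n" using ts by (simp add: mono_cone_def)
  have lt: "length \<theta> = n" using tm by (simp add: mono_cone_def)
  have ci: "c!i = clip a b (\<theta>s!i)" if "i<n" for i using that lts by (simp add: c_def)
  have cm: "c \<in> mono_cone n" using ts lts
    by (auto simp: mono_cone_def c_def intro!: clip_mono[OF ab])
  have cb: "c \<in> bounded_mono_cone n a b" using cm clip_bnd[OF ab] assms(1)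
    by (simp add: bounded_mono_cone_def ci)
  define v where "v = map (\<lambda>x. 2*x - clip a b x) \<theta>s"
  have vm: "v \<in> mono_cone n" using ts lts
    by (auto simp: mono_cone_def v_def intro!: clip_mono2[OF ab])
  have vidx: "v!i = 2*\<theta>s!i - c!i" if "i<n" for i using that lts by (simp add: v_def ci)
  have thb: "a \<le> ereal (\<theta>!i) \<and> ereal (\<theta>!i) \<le> b" if "i<n" for i
  proof -
    have "\<theta>!0 \<le> \<theta>!i" "\<theta>!i \<le> \<theta>!(n-1)" using tm that by (auto simp: mono_cone_def)
    hence "ereal (\<theta>!0) \<le> ereal (\<theta>!i)" "ereal (\<theta>!i) \<le> ereal (\<theta>!(n-1))" by auto
    moreover have "a \<le> ereal (\<theta>!0)" "ereal (\<theta>!(n-1)) \<le> b" using tb by (auto simp: bounded_mono_cone_def)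
    ultimately show ?thesis by (metis order_trans)
  qed
  have s1: "(\<Sum>i<n. (y!i - \<theta>s!i)*(\<theta>!i - \<theta>s!i)) \<le> 0"
    by (rule vi[OF assms(6) assms(5) tm])
  have s2: "(\<Sum>i<n. (y!i - \<theta>s!i)*(v!i - \<theta>s!i)) \<le> 0"
    by (rule vi[OF assms(6) assms(5) vm])
  have s3: "(\<Sum>i<n. (\<theta>s!i - c!i)*(\<theta>!i - c!i)) \<le> 0"
    using thb by (intro sum_nonpos) (simp add: ci clip_vi[OF ab])
  have eq: "(\<Sum>i<n. (y!i - c!i)*(\<theta>!i - c!i)) =
     (\<Sum>i<n. (y!i - \<theta>s!i)*(\<theta>!i - \<theta>s!i)) + (\<Sum>i<n. (y!i - \<theta>s!i)*(v!i - \<theta>s!i))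
     + (\<Sum>i<n. (\<theta>s!i - c!i)*(\<theta>!i - c!i))"
    by (simp add: sum.distrib[symmetric] vidx algebra_simps)
  have s4: "(\<Sum>i<n. (y!i - c!i)*(\<theta>!i - c!i)) \<le> 0" using s1 s2 s3 eq by linarith
  have sq: "sqdist y \<theta> = sqdist y c - 2*(\<Sum>i<n. (y!i - c!i)*(\<theta>!i - c!i))
       + (\<Sum>i<n. (\<theta>!i - c!i)^2)"
  proof -
    have "(y!i - \<theta>!i)^2 = (y!i - c!i)^2 - 2*((y!i - c!i)*(\<theta>!i - c!i)) + (\<theta>!i - c!i)^2" for i
      by (simp add: power2_eq_square algebra_simps)
    hence "sqdist y \<theta> = (\<Sum>i<n. (y!i - c!i)^2 - 2*((y!i - c!i)*(\<theta>!i - c!i)) + (\<theta>!i - c!i)^2)"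
      by (simp add: sqdist_def assms(5))
    thus ?thesis by (simp add: sqdist_def assms(5) sum.distrib sum_subtractf sum_distrib_left)
  qed
  have "sqdist y \<theta> \<le> sqdist y c" using assms(7) cb by (simp add: is_minimizer_on_def)
  hence "(\<Sum>i<n. (\<theta>!i - c!i)^2) \<le> 0" using sq s4 by linarith
  moreover have "(\<Sum>i<n. (\<theta>!i - c!i)^2) \<ge> 0" by (intro sum_nonneg) auto
  ultimately have "(\<Sum>i<n. (\<theta>!i - c!i)^2) = 0" by linarith
  hence "\<forall>i\<in>{..<n}. (\<theta>!i - c!i)^2 = 0"
    by (subst sum_nonneg_eq_0_iff[symmetric]) auto
  hence "\<theta> = c" using lt lts by (auto simp: c_def intro!: nth_equalityI)
  hence "set \<theta> = clip a b ` set \<theta>s" by (simp add: c_def)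
  thus ?thesis by (simp add: num_distinct_def card_image_le)
qed

end
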